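(* Let $Q=\{0,1,\dots,q-1\}$. Let $M\subseteq Q^5$ be an MDS code of length $5$ with code distance $4$, and let $M'\subseteq Q^4$ be the projection of $M$ onto some $4$ of its $5$ coordinates. Then there exists an MDS code $C\subseteq Q^4$ of length $4$ with code distance $2$ such that $M'\subseteq C$.
   Context: Let $Q=\{0,\dots,q-1\}$. A $t$-dimensional face of $Q^d$ is a set obtained by fixing the values of $d-t$ of the coordinates and letting the remaining $t$ coordinates range over $Q$. A subset $M\subseteq Q^d$ is an MDS code of length $d$ and code distance $t+1$ (written $MDS(t+1,d,q)$) if $|M\cap\Gamma|=1$ for every $t$-dimensional face $\Gamma$ of $Q^d$. The projection of $M$ onto a set $S$ of coordinates is the set of restrictions of the elements of $M$ to the coordinates in $S$. *)

theory Defs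
  imports Main
begin

definition cube :: "nat \<Rightarrow> nat \<Rightarrow> nat list set" where
  "cube q d = {x. length x = d \<and> set x \<subseteq> {..<q}}"

definition face :: "nat \<Rightarrow> nat \<Rightarrow> nat set \<Rightarrow> nat list \<Rightarrow> nat list set" where
  "face q d F v = {x \<in> cube q d. \<forall>i<d. i \<notin> F \<longrightarrow> x ! i = v ! i}"

definition is_face :: "nat \<Rightarrow> nat \<Rightarrow> nat \<Rightarrow> nat list set \<Rightarrow> bool" where
  "is_face q d t \<Gamma> \<longleftrightarrow>
     (\<exists>F v. F \<subseteq> {..<d} \<and> card F = t \<and> v \<in> cube q d \<and> \<Gamma> = face q d F v)"

definition MDS :: "nat \<Rightarrow> nat \<Rightarrow> nat \<Rightarrow> nat list set \<Rightarrow> bool" where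
  "MDS dist d q M \<longleftrightarrow> M \<subseteq> cube q d \<and>
     (\<forall>\<Gamma>. is_face q d (dist - 1) \<Gamma> \<longrightarrow> card (M \<inter> \<Gamma>) = 1)"

definition proj :: "nat set \<Rightarrow> nat list \<Rightarrow> nat list" where
  "proj S x = map (\<lambda>i. x ! i) (sorted_list_of_set S)"

end

theory Submission
  imports Defs
begin

lemma unique2:
  assumes mds: "MDS 4 5 q M" and ij: "i < 5" "j < 5" "i \<noteq> j" and ab: "a < q" "b < q"
  shows "\<exists>!c. c \<in> M \<and> c!i = a \<and> c!j = b"
proof -
  define F where "F = {..<(5::nat)} - {i,j}"
  define v where "v = (replicate 5 (0::nat))[i:=a, j:=b]"
  have F5: "F \<subseteq> {..<5}" unfolding F_def by auto
  have cF: "card F = 3" unfolding F_def using ij by (subst card_Diff_subset) auto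
  have q0: "0 < q" using ab by auto
  have sv: "set v \<subseteq> insert b (insert a {0})" unfolding v_def
    using set_update_subset_insert[of "(replicate 5 (0::nat))[i:=a]" j b]
      set_update_subset_insert[of "replicate 5 (0::nat)" i a] by auto
  have vc: "v \<in> cube q 5" using ab q0 sv unfolding cube_def by (auto simp: v_def)
  have isf: "is_face q 5 (4-1) (face q 5 F v)" unfolding is_face_def using F5 cF vc
    by (intro exI[of _ F] exI[of _ v]) simp
  have Mc: "M \<subseteq> cube q 5" using mds unfolding MDS_def by auto
  have eq: "M \<inter> face q 5 F v = {c. c \<in> M \<and> c!i = a \<and> c!j = b}"
  proof (intro set_eqI iffI)
    fix x assume "x \<in> M \<inter> face q 5 F v"
    then have "x \<in> M" "\<forall>l<5. l \<notin> F \<longrightarrow> x!l = v!l" unfolding face_def by auto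
    moreover have "i \<notin> F" "j \<notin> F" unfolding F_def by auto
    moreover have "v!i = a" "v!j = b" using ij unfolding v_def by (auto simp: nth_list_update)
    ultimately show "x \<in> {c. c \<in> M \<and> c!i = a \<and> c!j = b}" using ij by auto
  next
    fix x assume x: "x \<in> {c. c \<in> M \<and> c!i = a \<and> c!j = b}"
    have "\<forall>l<5. l \<notin> F \<longrightarrow> x!l = v!l"
    proof (intro allI impI)
      fix l assume "l < 5" "l \<notin> F"
      then have "l = i \<or> l = j" unfolding F_def by auto
      then show "x!l = v!l" using x ij unfolding v_def by (auto simp: nth_list_update)
    qed
    then show "x \<in> M \<inter> face q 5 F v" using x Mc unfolding face_def by auto
  qed
  have "\<forall>\<Gamma>. is_face q 5 (4-1) \<Gamma> \<longrightarrow> card (M \<inter> \<Gamma>) = 1" using mds unfolding MDS_def by blast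
  then have "card (M \<inter> face q 5 F v) = 1" using isf by blast
  then have "card {c. c \<in> M \<and> c!i = a \<and> c!j = b} = 1" using eq by simp
  then obtain c where "{c. c \<in> M \<and> c!i = a \<and> c!j = b} = {c}" by (rule card_1_singletonE)
  then show ?thesis by (intro ex1I[of _ c]) auto
qed

lemma core:
  assumes mds: "MDS 4 5 q M" and d: "distinct [i,j,i',j',k]" "i<5" "j<5" "i'<5" "j'<5" "k<5"
    and ab: "a < q" "b < q" "a' < q"
  shows "\<exists>t0<q. \<forall>t<q. (\<exists>c\<in>M. \<exists>c'\<in>M. c!i=a \<and> c!j=b \<and> c'!i'=a' \<and> c'!j'=t \<and> c!k=c'!k) \<longleftrightarrow> t = t0"
proof -
  have Mc: "M \<subseteq> cube q 5" using mds unfolding MDS_def by auto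
  have lt: "\<And>c l. c \<in> M \<Longrightarrow> l < 5 \<Longrightarrow> c!l < q" using Mc unfolding cube_def
  proof -
    fix c and l :: nat assume "c \<in> M" "l < 5"
    then have "length c = 5" "set c \<subseteq> {..<q}" using Mc unfolding cube_def by auto
    then show "c!l < q" using \<open>l < 5\<close> by (metis lessThan_iff nth_mem subsetD)
  qed
  obtain c where c: "c \<in> M" "c!i = a" "c!j = b" and cu: "\<And>x. x \<in> M \<and> x!i = a \<and> x!j = b \<Longrightarrow> x = c"
    using unique2[OF mds, of i j a b] d ab by auto
  have w: "c!k < q" using lt c d by auto
  obtain c' where c': "c' \<in> M" "c'!i' = a'" "c'!k = c!k" and cu': "\<And>x. x \<in> M \<and> x!i' = a' \<and> x!k = c!k \<Longrightarrow> x = c'"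
    using unique2[OF mds, of i' k a' "c!k"] d ab w by auto
  show ?thesis
  proof (intro exI[of _ "c'!j'"] conjI allI impI iffI)
    show "c'!j' < q" using lt c' d by auto
  next
    fix t assume "\<exists>c\<in>M. \<exists>c'\<in>M. c!i=a \<and> c!j=b \<and> c'!i'=a' \<and> c'!j'=t \<and> c!k=c'!k"
    then obtain x y where "x\<in>M" "y\<in>M" "x!i=a" "x!j=b" "y!i'=a'" "y!j'=t" "x!k=y!k" by blast
    then show "t = c'!j'" using cu cu' by metis
  next
    fix t assume "t = c'!j'"
    then show "\<exists>c\<in>M. \<exists>c'\<in>M. c!i=a \<and> c!j=b \<and> c'!i'=a' \<and> c'!j'=t \<and> c!k=c'!k"
      using c c' by metis
  qed
qed


lemma face_card:
  assumes v: "v \<in> cube q 4" and m: "m < 4"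
    and u: "\<exists>t0<q. \<forall>t<q. P (v[m:=t]) \<longleftrightarrow> t = t0"
  shows "card ({y \<in> cube q 4. P y} \<inter> face q 4 {m} v) = 1"
proof -
  obtain t0 where t0: "t0 < q" "\<And>t. t < q \<Longrightarrow> P (v[m:=t]) \<longleftrightarrow> t = t0" using u by blast
  have lv: "length v = 4" "set v \<subseteq> {..<q}" using v unfolding cube_def by auto
  have "{y \<in> cube q 4. P y} \<inter> face q 4 {m} v = {v[m:=t0]}"
  proof (intro set_eqI iffI)
    fix y assume y: "y \<in> {y \<in> cube q 4. P y} \<inter> face q 4 {m} v"
    then have ly: "length y = 4" "set y \<subseteq> {..<q}" "P y" "\<forall>i<4. i \<noteq> m \<longrightarrow> y!i = v!i"
      unfolding cube_def face_def by auto
    have yq: "y!m < q" using ly m by (metis lessThan_iff nth_mem subsetD)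
    have ye: "y = v[m:=y!m]" using ly lv m by (intro nth_equalityI) (auto simp: nth_list_update)
    then have "P (v[m:=y!m])" using ly by simp
    then have "y!m = t0" using t0 yq by blast
    then show "y \<in> {v[m:=t0]}" using ye by simp
  next
    fix y assume "y \<in> {v[m:=t0]}"
    then have y: "y = v[m:=t0]" by simp
    have "set y \<subseteq> {..<q}" using y lv t0 set_update_subset_insert[of v m t0] by auto
    then have "y \<in> cube q 4" using y lv unfolding cube_def by simp
    moreover have "P y" using y t0 by simp
    moreover have "y \<in> face q 4 {m} v" using y lv \<open>y \<in> cube q 4\<close> unfolding face_def
      by (auto simp: nth_list_update)
    ultimately show "y \<in> {y \<in> cube q 4. P y} \<inter> face q 4 {m} v" by simp
  qed
  then show ?thesis by simp
qed

lemma main4: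
  assumes mds: "MDS 4 5 q M" and d: "distinct [s0,s1,s2,s3,k]" "s0<5" "s1<5" "s2<5" "s3<5" "k<5"
  shows "\<exists>C. MDS 2 4 q C \<and> (\<lambda>x. [x!s0,x!s1,x!s2,x!s3]) ` M \<subseteq> C"
proof -
  define P where "P y \<longleftrightarrow> (\<exists>c\<in>M. \<exists>c'\<in>M. c!s0=y!0 \<and> c!s1=y!1 \<and> c'!s2=y!2 \<and> c'!s3=y!3 \<and> c!k=c'!k)" for y :: "nat list"
  define C where "C = {y \<in> cube q 4. P y}"
  have Mc: "M \<subseteq> cube q 5" using mds unfolding MDS_def by auto
  have lt: "\<And>c (l::nat). c \<in> M \<Longrightarrow> l < 5 \<Longrightarrow> c!l < q"
  proof -
    fix c and l :: nat assume "c \<in> M" "l < 5"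
    then have "length c = 5" "set c \<subseteq> {..<q}" using Mc unfolding cube_def by auto
    then show "c!l < q" using \<open>l < 5\<close> by (metis lessThan_iff nth_mem subsetD)
  qed
  have sub: "(\<lambda>x. [x!s0,x!s1,x!s2,x!s3]) ` M \<subseteq> C"
  proof
    fix y assume "y \<in> (\<lambda>x. [x!s0,x!s1,x!s2,x!s3]) ` M"
    then obtain x where x: "x \<in> M" "y = [x!s0,x!s1,x!s2,x!s3]" by blast
    have "y \<in> cube q 4" using x lt d unfolding cube_def by auto
    moreover have "P y" unfolding P_def using x by auto
    ultimately show "y \<in> C" unfolding C_def by simp
  qed
  have "MDS 2 4 q C"
    unfolding MDS_def
  proof (intro conjI allI impI)
    show "C \<subseteq> cube q 4" unfolding C_def by auto
  next
    fix \<Gamma> assume "is_face q 4 (2-1) \<Gamma>"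
    then obtain F v where F: "F \<subseteq> {..<4}" "card F = 1" "v \<in> cube q 4" "\<Gamma> = face q 4 F v"
      unfolding is_face_def by auto
    then obtain m where mF: "F = {m}" by (metis card_1_singletonE)
    then have m: "m < 4" using F by auto
    have lv: "length v = 4" "set v \<subseteq> {..<q}" using F unfolding cube_def by auto
    have vq: "\<And>i. i < 4 \<Longrightarrow> v!i < q" using lv by (metis lessThan_iff nth_mem subsetD)
    have "\<exists>t0<q. \<forall>t<q. P (v[m:=t]) \<longleftrightarrow> t = t0"
    proof -
      have "m = 0 \<or> m = 1 \<or> m = 2 \<or> m = 3" using m by auto
      then show ?thesis
      proof (elim disjE)
        assume m0: "m = 0"
        have "\<exists>t0<q. \<forall>t<q. (\<exists>c\<in>M. \<exists>c'\<in>M. c!s2=v!2 \<and> c!s3=v!3 \<and> c'!s1=v!1 \<and> c'!s0=t \<and> c!k=c'!k) \<longleftrightarrow> t = t0"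
          using d vq by (intro core[OF mds]) auto
        moreover have "\<And>t. P (v[m:=t]) \<longleftrightarrow> (\<exists>c\<in>M. \<exists>c'\<in>M. c!s2=v!2 \<and> c!s3=v!3 \<and> c'!s1=v!1 \<and> c'!s0=t \<and> c!k=c'!k)"
          unfolding P_def using m0 lv by (auto simp: nth_list_update; metis)
        ultimately show ?thesis by simp
      next
        assume m0: "m = 1"
        have "\<exists>t0<q. \<forall>t<q. (\<exists>c\<in>M. \<exists>c'\<in>M. c!s2=v!2 \<and> c!s3=v!3 \<and> c'!s0=v!0 \<and> c'!s1=t \<and> c!k=c'!k) \<longleftrightarrow> t = t0"
          using d vq by (intro core[OF mds]) auto
        moreover have "\<And>t. P (v[m:=t]) \<longleftrightarrow> (\<exists>c\<in>M. \<exists>c'\<in>M. c!s2=v!2 \<and> c!s3=v!3 \<and> c'!s0=v!0 \<and> c'!s1=t \<and> c!k=c'!k)"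
          unfolding P_def using m0 lv by (auto simp: nth_list_update; metis)
        ultimately show ?thesis by simp
      next
        assume m0: "m = 2"
        have "\<exists>t0<q. \<forall>t<q. (\<exists>c\<in>M. \<exists>c'\<in>M. c!s0=v!0 \<and> c!s1=v!1 \<and> c'!s3=v!3 \<and> c'!s2=t \<and> c!k=c'!k) \<longleftrightarrow> t = t0"
          using d vq by (intro core[OF mds]) auto
        moreover have "\<And>t. P (v[m:=t]) \<longleftrightarrow> (\<exists>c\<in>M. \<exists>c'\<in>M. c!s0=v!0 \<and> c!s1=v!1 \<and> c'!s3=v!3 \<and> c'!s2=t \<and> c!k=c'!k)"
          unfolding P_def using m0 lv by (auto simp: nth_list_update; metis)
        ultimately show ?thesis by simp
      next
        assume m0: "m = 3"
        have "\<exists>t0<q. \<forall>t<q. (\<exists>c\<in>M. \<exists>c'\<in>M. c!s0=v!0 \<and> c!s1=v!1 \<and> c'!s2=v!2 \<and> c'!s3=t \<and> c!k=c'!k) \<longleftrightarrow> t = t0"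
          using d vq by (intro core[OF mds]) auto
        moreover have "\<And>t. P (v[m:=t]) \<longleftrightarrow> (\<exists>c\<in>M. \<exists>c'\<in>M. c!s0=v!0 \<and> c!s1=v!1 \<and> c'!s2=v!2 \<and> c'!s3=t \<and> c!k=c'!k)"
          unfolding P_def using m0 lv by (auto simp: nth_list_update; metis)
        ultimately show ?thesis by simp
      qed
    qed
    then have "card ({y \<in> cube q 4. P y} \<inter> face q 4 {m} v) = 1"
      using face_card[OF F(3) m] by blast
    then show "card (C \<inter> \<Gamma>) = 1" unfolding C_def using F mF by simp
  qed
  then show ?thesis using sub by blast
qed

lemma sl0: "sorted_list_of_set ({..<5::nat} - {0}) = [1,2,3,4]"
  by (intro sorted_list_of_set_unique[THEN iffD1]) (auto simp: lessThan_nat_numeral)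

lemma sl1: "sorted_list_of_set ({..<5::nat} - {1}) = [0,2,3,4]"
  by (intro sorted_list_of_set_unique[THEN iffD1]) (auto simp: lessThan_nat_numeral)

lemma sl2: "sorted_list_of_set ({..<5::nat} - {2}) = [0,1,3,4]"
  by (intro sorted_list_of_set_unique[THEN iffD1]) (auto simp: lessThan_nat_numeral)

lemma sl3: "sorted_list_of_set ({..<5::nat} - {3}) = [0,1,2,4]"
  by (intro sorted_list_of_set_unique[THEN iffD1]) (auto simp: lessThan_nat_numeral)

lemma sl4: "sorted_list_of_set ({..<5::nat} - {4}) = [0,1,2,3]"
  by (intro sorted_list_of_set_unique[THEN iffD1]) (auto simp: lessThan_nat_numeral)

theorem proposition2:
  fixes q :: nat and M :: "nat list set" and S :: "nat set"
  assumes "MDS 4 5 q M"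
    and "S \<subseteq> {..<5}" and "card S = 4"
  shows "\<exists>C. MDS 2 4 q C \<and> proj S ` M \<subseteq> C"
proof -
  have "card ({..<5::nat} - S) = 1" using card_Diff_subset[of S "{..<5}"] finite_subset[OF assms(2)] assms(2,3) by simp
  then obtain k where k: "{..<5::nat} - S = {k}" by (rule card_1_singletonE)
  then have k5: "k < 5" by auto
  have Sk: "S = {..<5} - {k}" using k assms(2) by blast
  have gen: "\<exists>C. MDS 2 4 q C \<and> proj S ` M \<subseteq> C"
    if "distinct [s0,s1,s2,s3,k]" "s0<5" "s1<5" "s2<5" "s3<5" "sorted_list_of_set S = [s0,s1,s2,s3]"
    for s0 s1 s2 s3
  proof -
    have "proj S = (\<lambda>x. [x!s0,x!s1,x!s2,x!s3])" unfolding proj_def using that(6) by auto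
    then show ?thesis using main4[OF assms(1) that(1-5) k5] by simp
  qed
  have "k = 0 \<or> k = 1 \<or> k = 2 \<or> k = 3 \<or> k = 4" using k5 by auto
  then show ?thesis
  proof (elim disjE)
    assume "k = 0"
    moreover have "sorted_list_of_set S = [1,2,3,4]" using sl0 Sk \<open>k = 0\<close> by simp
    ultimately show ?thesis by (intro gen[of 1 2 3 4]) simp_all
  next
    assume "k = 1"
    moreover have "sorted_list_of_set S = [0,2,3,4]" using sl1 Sk \<open>k = 1\<close> by simp
    ultimately show ?thesis by (intro gen[of 0 2 3 4]) simp_all
  next
    assume "k = 2"
    moreover have "sorted_list_of_set S = [0,1,3,4]" using sl2 Sk \<open>k = 2\<close> by simp
    ultimately show ?thesis by (intro gen[of 0 1 3 4]) simp_all
  next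
    assume "k = 3"
    moreover have "sorted_list_of_set S = [0,1,2,4]" using sl3 Sk \<open>k = 3\<close> by simp
    ultimately show ?thesis by (intro gen[of 0 1 2 4]) simp_all
  next
    assume "k = 4"
    moreover have "sorted_list_of_set S = [0,1,2,3]" using sl4 Sk \<open>k = 4\<close> by simp
    ultimately show ?thesis by (intro gen[of 0 1 2 3]) simp_all
  qed
qed

end
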